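(* Let $\Omega\subset\mathbb{R}^2$ be a bounded domain, $X\subset\overline{\Omega}$ finite with $X\setminus\partial\Omega\subset\mathrm{int}(\mathrm{conv}(X\cap\partial\Omega))$, $f_X$ a discrete load on $X$, and $E_0,V_0>0$. Then $$\mathcal{C}_{X,\min}\ge\frac{(\mathcal{Z}_X)^2}{2E_0V_0}.$$
   Context: Discrete setting: $\bar n=\#X$, $n=\#(X\setminus\partial\Omega)$, enumeration $\chi:\{1,\dots,n\}\to X\setminus\partial\Omega$; $m=\bar n(\bar n-1)/2$, enumeration $k\mapsto\{\chi_-(k),\chi_+(k)\}$ of unordered pairs of distinct points of $X$. $f_i=f_X(\{\chi(i)\})$, $l_k=|\chi_+(k)-\chi_-(k)|$. Vectors in $\mathbb{R}^n$ are identified with functions on $X$ vanishing on $X\cap\partial\Omega$. $(\mathbf{B}_1\mathbf{u}_1+\mathbf{B}_2\mathbf{u}_2)_k=(u(\chi_+(k))-u(\chi_-(k)))\cdot(\chi_+(k)-\chi_-(k))/l_k$, $(\mathbf{D}\mathbf{w})_k=w(\chi_+(k))-w(\chi_-(k))$. $\mathrm{K}=\{(t_1,t_2,t_3):t_1,t_2\ge0,2t_1t_2\ge t_3^2\}$. $\mathcal{Z}_X:=\min\{\mathbf{l}^\top\mathbf{s}+2\mathbf{l}^\top\mathbf{r}:\mathbf{s},\mathbf{r}\in\mathbb{R}^m_+,\mathbf{q}\in\mathbb{R}^m,\mathbf{B}_1^\top\mathbf{s}=\mathbf{B}_2^\top\mathbf{s}=\mathbf{0},\mathbf{D}^\top\mathbf{q}=\mathbf{f},(r_k,s_k,q_k)\in\mathrm{K}\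 \forall k\}$ (problem $(\mathcal{P}_X)$). For $\mathbf{z}\in\mathbb{R}^n$: $\Delta_k(\mathbf{z})=(\mathbf{D}\mathbf{z})_k/l_k$, $J_{kk}(\mathbf{z})=\sqrt{1+\Delta_k(\mathbf{z})^2}$, $\hat l_k(\mathbf{z})=J_{kk}(\mathbf{z})l_k$; $\mathrm{e}_k(\mathbf{u}_1,\mathbf{u}_2)=(\mathbf{B}_1\mathbf{u}_1+\mathbf{B}_2\mathbf{u}_2)_k/l_k$; $\hat{\mathrm{e}}_k(\mathbf{u}_1,\mathbf{u}_2,\mathbf{w};\mathbf{z})=\dfrac{\mathrm{e}_k(\mathbf{u}_1,\mathbf{u}_2)+\Delta_k(\mathbf{z})\Delta_k(\mathbf{w})}{1+\Delta_k(\mathbf{z})^2}$. Compliance of $(\mathbf{z},\mathbf{a})$, $\mathbf{a}\in\mathbb{R}^m_+$: $\mathcal{C}_X(\mathbf{z},\mathbf{a})=\sup_{\mathbf{u}_1,\mathbf{u}_2,\mathbf{w}\in\mathbb{R}^n}\{\mathbf{f}^\top\mathbf{w}-\frac{E_0}{2}\sum_k((\hat{\mathrm{e}}_k(\mathbf{u}_1,\mathbf{u}_2,\mathbf{w};\mathbf{z}))_+)^2a_k\hat l_k(\mathbf{z})\}$. It is known (standard duality) that equivalently $\mathcal{C}_X(\mathbf{z},\mathbf{a})=\inf\{\frac{1}{2E_0}\sum_k\frac{\hat s_k^2}{a_k}\hat l_k(\mathbf{z}):\hat{\mathbf{s}}\in\mathbb{R}^m_+,\mathbf{B}_1^\top\mathbf{s}=\mathbf{B}_2^\top\mathbf{s}=\mathbf{0},\mathbf{D}^\top\mathbf{q}=\mathbf{f},\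 s_k=\hat s_k/J_{kk}(\mathbf{z}),q_k=\Delta_k(\mathbf{z})\hat s_k/J_{kk}(\mathbf{z})\}$ with $\hat s_k^2/a_k:=0$ if $a_k=\hat s_k=0$ and $+\infty$ if $a_k=0\neq\hat s_k$. $(\mathrm{MCGS}_X)$: $\mathcal{C}_{X,\min}=\inf\{\mathcal{C}_X(\mathbf{z},\mathbf{a}):\mathbf{z}\in\mathbb{R}^n,\mathbf{a}\in\mathbb{R}^m_+,\sum_ka_k\hat l_k(\mathbf{z})\le V_0\}$. *)

theory Defs
  imports "HOL-Analysis.Analysis"
begin

text \<open>Vectors in R^n are identified with real functions on points that vanish outside Xi.
 Bars are enumerated by k in {1..m} with endpoints cm k (chi_minus) and cp k (chi_plus).\<close>

definition interior_nodes :: "(real^2) set \<Rightarrow> (real^2) set \<Rightarrow> (real^2) set" where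
  "interior_nodes X \<Omega> = X - frontier \<Omega>"

definition nodal :: "(real^2) set \<Rightarrow> (real^2) set \<Rightarrow> (real^2 \<Rightarrow> real) \<Rightarrow> bool" where
  "nodal X \<Omega> v \<longleftrightarrow> (\<forall>x. x \<notin> interior_nodes X \<Omega> \<longrightarrow> v x = 0)"

definition bar_len :: "(nat \<Rightarrow> real^2) \<Rightarrow> (nat \<Rightarrow> real^2) \<Rightarrow> nat \<Rightarrow> real" where
  "bar_len cm cp k = norm (cp k - cm k)"

definition incid :: "(nat \<Rightarrow> real^2) \<Rightarrow> (nat \<Rightarrow> real^2) \<Rightarrow> nat \<Rightarrow> real^2 \<Rightarrow> real" where
  "incid cm cp k x = (if cp k = x then 1 else 0) - (if cm k = x then 1 else 0)"

text \<open>(B1^T s)_x and (B2^T s)_x combined into a vector of real^2.\<close>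
definition BT :: "(nat \<Rightarrow> real^2) \<Rightarrow> (nat \<Rightarrow> real^2) \<Rightarrow> nat \<Rightarrow> (nat \<Rightarrow> real) \<Rightarrow> real^2 \<Rightarrow> real^2" where
  "BT cm cp m s x = (\<Sum>k=1..m. (s k * incid cm cp k x / bar_len cm cp k) *\<^sub>R (cp k - cm k))"

definition DT :: "(nat \<Rightarrow> real^2) \<Rightarrow> (nat \<Rightarrow> real^2) \<Rightarrow> nat \<Rightarrow> (nat \<Rightarrow> real) \<Rightarrow> real^2 \<Rightarrow> real" where
  "DT cm cp m q x = (\<Sum>k=1..m. q k * incid cm cp k x)"

definition coneK :: "real \<Rightarrow> real \<Rightarrow> real \<Rightarrow> bool" where
  "coneK t1 t2 t3 \<longleftrightarrow> t1 \<ge> 0 \<and> t2 \<ge> 0 \<and> 2 * t1 * t2 \<ge> t3\<^sup>2"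

definition ZX :: "(real^2) set \<Rightarrow> (real^2) set \<Rightarrow> (nat \<Rightarrow> real^2) \<Rightarrow> (nat \<Rightarrow> real^2) \<Rightarrow> nat
   \<Rightarrow> (real^2 \<Rightarrow> real) \<Rightarrow> real" where
  "ZX X \<Omega> cm cp m f = Inf {(\<Sum>k=1..m. bar_len cm cp k * s k) + 2 * (\<Sum>k=1..m. bar_len cm cp k * r k) | s r q.
      (\<forall>k\<in>{1..m}. s k \<ge> 0 \<and> r k \<ge> 0 \<and> coneK (r k) (s k) (q k)) \<and>
      (\<forall>x\<in>interior_nodes X \<Omega>. BT cm cp m s x = 0 \<and> DT cm cp m q x = f x)}"

definition Delta :: "(nat \<Rightarrow> real^2) \<Rightarrow> (nat \<Rightarrow> real^2) \<Rightarrow> (real^2 \<Rightarrow> real) \<Rightarrow> nat \<Rightarrow> real" where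
  "Delta cm cp z k = (z (cp k) - z (cm k)) / bar_len cm cp k"

definition Jkk :: "(nat \<Rightarrow> real^2) \<Rightarrow> (nat \<Rightarrow> real^2) \<Rightarrow> (real^2 \<Rightarrow> real) \<Rightarrow> nat \<Rightarrow> real" where
  "Jkk cm cp z k = sqrt (1 + (Delta cm cp z k)\<^sup>2)"

definition lhat :: "(nat \<Rightarrow> real^2) \<Rightarrow> (nat \<Rightarrow> real^2) \<Rightarrow> (real^2 \<Rightarrow> real) \<Rightarrow> nat \<Rightarrow> real" where
  "lhat cm cp z k = Jkk cm cp z k * bar_len cm cp k"

definition strain :: "(nat \<Rightarrow> real^2) \<Rightarrow> (nat \<Rightarrow> real^2) \<Rightarrow> (real^2 \<Rightarrow> real) \<Rightarrow> (real^2 \<Rightarrow> real) \<Rightarrow> nat \<Rightarrow> real" where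
  "strain cm cp u1 u2 k =
     ((u1 (cp k) - u1 (cm k)) * (cp k - cm k)$1 + (u2 (cp k) - u2 (cm k)) * (cp k - cm k)$2)
       / bar_len cm cp k / bar_len cm cp k"

definition strain_hat :: "(nat \<Rightarrow> real^2) \<Rightarrow> (nat \<Rightarrow> real^2) \<Rightarrow> (real^2 \<Rightarrow> real) \<Rightarrow> (real^2 \<Rightarrow> real)
   \<Rightarrow> (real^2 \<Rightarrow> real) \<Rightarrow> (real^2 \<Rightarrow> real) \<Rightarrow> nat \<Rightarrow> real" where
  "strain_hat cm cp u1 u2 w z k =
     (strain cm cp u1 u2 k + Delta cm cp z k * Delta cm cp w k) / (1 + (Delta cm cp z k)\<^sup>2)"

definition CX :: "(real^2) set \<Rightarrow> (real^2) set \<Rightarrow> (nat \<Rightarrow> real^2) \<Rightarrow> (nat \<Rightarrow> real^2) \<Rightarrow> nat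
   \<Rightarrow> (real^2 \<Rightarrow> real) \<Rightarrow> real \<Rightarrow> (real^2 \<Rightarrow> real) \<Rightarrow> (nat \<Rightarrow> real) \<Rightarrow> ereal" where
  "CX X \<Omega> cm cp m f E0 z a =
     (SUP uw \<in> {(u1, u2, w). nodal X \<Omega> u1 \<and> nodal X \<Omega> u2 \<and> nodal X \<Omega> w}.
        ereal ((\<Sum>x\<in>interior_nodes X \<Omega>. f x * snd (snd uw) x)
          - E0 / 2 * (\<Sum>k=1..m. (max 0 (strain_hat cm cp (fst uw) (fst (snd uw)) (snd (snd uw)) z k))\<^sup>2
                                   * a k * lhat cm cp z k)))"

definition CXmin :: "(real^2) set \<Rightarrow> (real^2) set \<Rightarrow> (nat \<Rightarrow> real^2) \<Rightarrow> (nat \<Rightarrow> real^2) \<Rightarrow> nat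
   \<Rightarrow> (real^2 \<Rightarrow> real) \<Rightarrow> real \<Rightarrow> real \<Rightarrow> ereal" where
  "CXmin X \<Omega> cm cp m f E0 V0 =
     (INF za \<in> {(z, a). nodal X \<Omega> z \<and> (\<forall>k\<in>{1..m}. a k \<ge> 0)
                     \<and> (\<Sum>k=1..m. a k * lhat cm cp z k) \<le> V0}.
        CX X \<Omega> cm cp m f E0 (fst za) (snd za))"

end

theory Submission
  imports Defs
begin

lemma subseq_fin:
  fixes s :: "nat \<Rightarrow> 'a \<Rightarrow> real"
  assumes "finite K" and "\<And>n x. x \<in> K \<Longrightarrow> \<bar>s n x\<bar> \<le> B x"
  shows "\<exists>r g. strict_mono r \<and> (\<forall>x\<in>K. (\<lambda>n. s (r n) x) \<longlonglongrightarrow> g x)"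
  using assms
proof (induction K rule: finite_induct)
  case empty
  show ?case by (rule exI[of _ id]) (auto simp: strict_mono_def)
next
  case (insert k K)
  then obtain r g where r: "strict_mono r" and g: "\<forall>x\<in>K. (\<lambda>n. s (r n) x) \<longlonglongrightarrow> g x"
    by blast
  have "bounded (range (\<lambda>n. s (r n) k))"
    unfolding bounded_iff using insert.prems by auto
  then obtain l r' where r': "strict_mono r'" and l: "((\<lambda>n. s (r n) k) \<circ> r') \<longlonglongrightarrow> l"
    using bounded_imp_convergent_subsequence by blast
  have "strict_mono (r \<circ> r')" using r r' by (simp add: strict_mono_o)
  moreover have "\<forall>x\<in>insert k K. (\<lambda>n. s ((r \<circ> r') n) x) \<longlonglongrightarrow> (g(k:=l)) x"
  proof
    fix x assume "x \<in> insert k K"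
    show "(\<lambda>n. s ((r \<circ> r') n) x) \<longlonglongrightarrow> (g(k:=l)) x"
    proof (cases "x = k")
      case True then show ?thesis using l by (simp add: comp_def)
    next
      case False
      then have "x \<in> K" using \<open>x \<in> insert k K\<close> by auto
      then have "((\<lambda>n. s (r n) x) \<circ> r') \<longlonglongrightarrow> g x" using g r' LIMSEQ_subseq_LIMSEQ by blast
      then show ?thesis using False by (simp add: comp_def)
    qed
  qed
  ultimately show ?case by blast
qed

lemma maxsq_ineq:
  fixes p d :: real
  shows "(max 0 (p + d))\<^sup>2 \<le> (max 0 p)\<^sup>2 + 2 * max 0 p * d + d\<^sup>2"
proof -
  consider "p \<ge> 0" "p + d \<ge> 0" | "p \<ge> 0" "p + d < 0" | "p < 0" "p + d \<ge> 0" | "p < 0" "p + d < 0"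
    by linarith
  then show ?thesis
  proof cases
    case 1 then show ?thesis by (simp add: power2_eq_square algebra_simps)
  next
    case 2
    have "0 \<le> (p + d)\<^sup>2" by simp
    then show ?thesis using 2 by (simp add: power2_eq_square algebra_simps)
  next
    case 3
    have "(p + d) * (p + d) \<le> d * d" using 3 by (intro mult_mono) auto
    then show ?thesis using 3 by (simp add: power2_eq_square)
  next
    case 4 then show ?thesis by simp
  qed
qed

lemma lin_zero:
  fixes b K :: real
  assumes "\<And>t. t * b \<le> t\<^sup>2 * K" "K \<ge> 0"
  shows "b = 0"
proof -
  have K1: "K + 1 > 0" using assms(2) by simp
  have "(b / (K + 1)) * b \<le> (b / (K + 1))\<^sup>2 * K" by (rule assms(1))
  then have "(b * b) / (K + 1) \<le> (b * b * K) / ((K + 1) * (K + 1))"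
    by (simp add: power2_eq_square)
  then have "(b * b) / (K + 1) * ((K + 1) * (K + 1)) \<le> (b * b * K) / ((K + 1) * (K + 1)) * ((K + 1) * (K + 1))"
    using K1 by (intro mult_right_mono) auto
  moreover have "(b * b) / (K + 1) * ((K + 1) * (K + 1)) = b * b * (K + 1)"
    using K1 by (simp add: field_simps)
  moreover have "(b * b * K) / ((K + 1) * (K + 1)) * ((K + 1) * (K + 1)) = b * b * K"
    using K1 by simp
  ultimately have "b * b * (K + 1) \<le> b * b * K" by simp
  then have "b * b \<le> 0" by (simp add: algebra_simps)
  then show ?thesis by (auto simp: mult_le_0_iff)
qed


locale trs =
  fixes X \<Omega> :: "(real^2) set" and cm cp :: "nat \<Rightarrow> real^2" and m :: nat
    and f :: "real^2 \<Rightarrow> real" and E0 :: real and z :: "real^2 \<Rightarrow> real" and a :: "nat \<Rightarrow> real"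
  assumes finI: "finite (interior_nodes X \<Omega>)"
    and distk: "\<And>k. k \<in> {1..m} \<Longrightarrow> cm k \<noteq> cp k"
    and E0pos: "E0 > 0" and apos: "\<And>k. k \<in> {1..m} \<Longrightarrow> a k \<ge> 0"
begin

abbreviation "I \<equiv> interior_nodes X \<Omega>"
definition nod :: "(real^2 \<Rightarrow> real) \<Rightarrow> bool" where "nod v \<longleftrightarrow> (\<forall>x. x \<notin> I \<longrightarrow> v x = 0)"
definition eh :: "(real^2 \<Rightarrow> real) \<Rightarrow> (real^2 \<Rightarrow> real) \<Rightarrow> (real^2 \<Rightarrow> real) \<Rightarrow> nat \<Rightarrow> real" where "eh u1 u2 w k = strain_hat cm cp u1 u2 w z k"
definition Q :: "(real^2 \<Rightarrow> real) \<Rightarrow> (real^2 \<Rightarrow> real) \<Rightarrow> (real^2 \<Rightarrow> real) \<Rightarrow> real" where "Q u1 u2 w = (\<Sum>k=1..m. (max 0 (eh u1 u2 w k))\<^sup>2 * a k * lhat cm cp z k)"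
definition Phi :: "(real^2 \<Rightarrow> real) \<Rightarrow> (real^2 \<Rightarrow> real) \<Rightarrow> (real^2 \<Rightarrow> real) \<Rightarrow> real" where "Phi u1 u2 w = (\<Sum>x\<in>I. f x * w x) - E0 / 2 * Q u1 u2 w"
definition inn :: "(real^2 \<Rightarrow> real) \<Rightarrow> (real^2 \<Rightarrow> real) \<Rightarrow> (real^2 \<Rightarrow> real) \<Rightarrow> (real^2 \<Rightarrow> real) \<Rightarrow> (real^2 \<Rightarrow> real) \<Rightarrow> (real^2 \<Rightarrow> real) \<Rightarrow> real" where "inn u1 u2 w h1 h2 h3 = (\<Sum>x\<in>I. u1 x * h1 x + u2 x * h2 x + w x * h3 x)"
definition nrm :: "(real^2 \<Rightarrow> real) \<Rightarrow> (real^2 \<Rightarrow> real) \<Rightarrow> (real^2 \<Rightarrow> real) \<Rightarrow> real" where "nrm u1 u2 w = inn u1 u2 w u1 u2 w"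
definition Phie :: "real \<Rightarrow> (real^2 \<Rightarrow> real) \<Rightarrow> (real^2 \<Rightarrow> real) \<Rightarrow> (real^2 \<Rightarrow> real) \<Rightarrow> real" where "Phie e u1 u2 w = Phi u1 u2 w - e / 2 * nrm u1 u2 w"

lemma nod_eq: "nodal X \<Omega> = nod"
  by (auto simp: nodal_def nod_def fun_eq_iff)

lemma lpos: "k \<in> {1..m} \<Longrightarrow> bar_len cm cp k > 0"
  using distk[of k] by (simp add: bar_len_def)

lemma Jpos: "Jkk cm cp z k > 0"
  unfolding Jkk_def by (simp add: add_pos_nonneg)

lemma Jsq: "(Jkk cm cp z k)\<^sup>2 = 1 + (Delta cm cp z k)\<^sup>2"
  unfolding Jkk_def by (simp add: add_nonneg_nonneg)

lemma lhat_pos: "k \<in> {1..m} \<Longrightarrow> lhat cm cp z k > 0"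
  unfolding lhat_def using Jpos lpos by simp

lemma eh_lin:
  "eh (\<lambda>y. u1 y + t * h1 y) (\<lambda>y. u2 y + t * h2 y) (\<lambda>y. w y + t * h3 y) k
     = eh u1 u2 w k + t * eh h1 h2 h3 k"
  unfolding eh_def strain_hat_def strain_def Delta_def
  by (simp add: field_simps add_divide_distrib diff_divide_distrib)

lemma nrm_nonneg: "nrm u1 u2 w \<ge> 0"
  unfolding nrm_def inn_def by (intro sum_nonneg) auto

lemma nrm_lin:
  "nrm (\<lambda>y. u1 y + t * h1 y) (\<lambda>y. u2 y + t * h2 y) (\<lambda>y. w y + t * h3 y)
    = nrm u1 u2 w + 2 * t * inn u1 u2 w h1 h2 h3 + t\<^sup>2 * nrm h1 h2 h3"
  unfolding nrm_def inn_def
  by (simp add: sum.distrib sum_distrib_left algebra_simps power2_eq_square)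

lemma Phie_cont:
  assumes "\<And>x. (\<lambda>n. U1 n x) \<longlonglongrightarrow> g1 x" "\<And>x. (\<lambda>n. U2 n x) \<longlonglongrightarrow> g2 x"
    "\<And>x. (\<lambda>n. W n x) \<longlonglongrightarrow> g3 x"
  shows "(\<lambda>n. Phie e (U1 n) (U2 n) (W n)) \<longlonglongrightarrow> Phie e g1 g2 g3"
  unfolding Phie_def Phi_def Q_def nrm_def inn_def eh_def strain_hat_def strain_def Delta_def
  unfolding divide_inverse
  by (intro tendsto_intros assms)


lemma first_order:
  assumes v: "nod v1" "nod v2" "nod v3" and h: "nod h1" "nod h2" "nod h3"
    and mx: "\<And>u1 u2 u3. nod u1 \<Longrightarrow> nod u2 \<Longrightarrow> nod u3 \<Longrightarrow> Phie e u1 u2 u3 \<le> Phie e v1 v2 v3"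
    and e: "e \<ge> 0"
  shows "(\<Sum>k=1..m. E0 * a k * max 0 (eh v1 v2 v3 k) * lhat cm cp z k * eh h1 h2 h3 k)
          = (\<Sum>x\<in>I. f x * h3 x) - e * inn v1 v2 v3 h1 h2 h3"
proof -
  define p where "p k = eh v1 v2 v3 k" for k
  define q where "q k = eh h1 h2 h3 k" for k
  define G where "G = (\<Sum>k=1..m. 2 * max 0 (p k) * q k * (a k * lhat cm cp z k))"
  define M where "M = (\<Sum>k=1..m. (q k)\<^sup>2 * (a k * lhat cm cp z k))"
  define F1 where "F1 = (\<Sum>x\<in>I. f x * h3 x)"
  define \<beta> where "\<beta> = F1 - E0 / 2 * G - e * inn v1 v2 v3 h1 h2 h3"
  define K where "K = E0 / 2 * M + e / 2 * nrm h1 h2 h3"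
  have alh: "k \<in> {1..m} \<Longrightarrow> a k * lhat cm cp z k \<ge> 0" for k
    using apos lhat_pos by (simp add: less_imp_le)
  have M0: "M \<ge> 0" unfolding M_def using alh by (intro sum_nonneg) auto
  have K0: "K \<ge> 0" unfolding K_def using M0 E0pos e nrm_nonneg by simp
  have "t * \<beta> \<le> t\<^sup>2 * K" for t
  proof -
    let ?u1 = "\<lambda>y. v1 y + t * h1 y" and ?u2 = "\<lambda>y. v2 y + t * h2 y" and ?u3 = "\<lambda>y. v3 y + t * h3 y"
    have nd: "nod ?u1" "nod ?u2" "nod ?u3" using v h by (auto simp: nod_def)
    have le: "Phie e ?u1 ?u2 ?u3 \<le> Phie e v1 v2 v3" using mx[OF nd] .
    have Qle: "Q ?u1 ?u2 ?u3 \<le> Q v1 v2 v3 + t * G + t\<^sup>2 * M"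
    proof -
      have "Q ?u1 ?u2 ?u3 = (\<Sum>k=1..m. (max 0 (p k + t * q k))\<^sup>2 * (a k * lhat cm cp z k))"
        unfolding Q_def eh_lin p_def q_def by (simp add: mult.assoc)
      also have "\<dots> \<le> (\<Sum>k=1..m. ((max 0 (p k))\<^sup>2 + 2 * max 0 (p k) * (t * q k) + (t * q k)\<^sup>2) * (a k * lhat cm cp z k))"
        using maxsq_ineq alh by (intro sum_mono mult_right_mono) auto
      also have "\<dots> = Q v1 v2 v3 + t * G + t\<^sup>2 * M"
        unfolding Q_def G_def M_def p_def
        by (simp add: sum.distrib sum_distrib_left algebra_simps power2_eq_square)
      finally show ?thesis .
    qed
    have Fl: "(\<Sum>x\<in>I. f x * ?u3 x) = (\<Sum>x\<in>I. f x * v3 x) + t * F1"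
      unfolding F1_def by (simp add: sum.distrib sum_distrib_left algebra_simps)
    have "Phie e ?u1 ?u2 ?u3 = (\<Sum>x\<in>I. f x * v3 x) + t * F1 - E0 / 2 * Q ?u1 ?u2 ?u3
         - e / 2 * (nrm v1 v2 v3 + 2 * t * inn v1 v2 v3 h1 h2 h3 + t\<^sup>2 * nrm h1 h2 h3)"
      unfolding Phie_def Phi_def nrm_lin Fl by simp
    moreover have "E0 / 2 * Q ?u1 ?u2 ?u3 \<le> E0 / 2 * (Q v1 v2 v3 + t * G + t\<^sup>2 * M)"
      using Qle E0pos by simp
    ultimately have "Phie e v1 v2 v3 + t * \<beta> - t\<^sup>2 * K \<le> Phie e ?u1 ?u2 ?u3"
      unfolding Phie_def Phi_def \<beta>_def K_def by (simp add: algebra_simps)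
    then show ?thesis using le by simp
  qed
  then have "\<beta> = 0" using lin_zero K0 by blast
  moreover have "(\<Sum>k=1..m. E0 * a k * max 0 (eh v1 v2 v3 k) * lhat cm cp z k * eh h1 h2 h3 k) = E0 / 2 * G"
    unfolding G_def p_def q_def by (simp add: sum_distrib_left algebra_simps)
  ultimately show ?thesis unfolding \<beta>_def F1_def by simp
qed

lemma value_at_max:
  assumes v: "nod v1" "nod v2" "nod v3"
    and mx: "\<And>u1 u2 u3. nod u1 \<Longrightarrow> nod u2 \<Longrightarrow> nod u3 \<Longrightarrow> Phie e u1 u2 u3 \<le> Phie e v1 v2 v3"
    and e: "e \<ge> 0"
  shows "Phie e v1 v2 v3 = E0 / 2 * Q v1 v2 v3 + e / 2 * nrm v1 v2 v3"
proof -
  have fo: "(\<Sum>k=1..m. E0 * a k * max 0 (eh v1 v2 v3 k) * lhat cm cp z k * eh v1 v2 v3 k)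
          = (\<Sum>x\<in>I. f x * v3 x) - e * inn v1 v2 v3 v1 v2 v3"
    by (rule first_order[OF v v mx e])
  have "max 0 y * y = (max 0 y)\<^sup>2" for y :: real
    by (simp add: max_def power2_eq_square)
  then have "(\<Sum>k=1..m. E0 * a k * max 0 (eh v1 v2 v3 k) * lhat cm cp z k * eh v1 v2 v3 k) = E0 * Q v1 v2 v3"
    unfolding Q_def sum_distrib_left
    by (intro sum.cong refl) (metis (no_types, lifting) mult.commute mult.left_commute)
  then show ?thesis using fo unfolding Phie_def Phi_def nrm_def by (simp add: algebra_simps)
qed


lemma Phie_zero: "Phie e (\<lambda>_. 0) (\<lambda>_. 0) (\<lambda>_. 0) = 0"
  unfolding Phie_def Phi_def Q_def nrm_def inn_def eh_def strain_hat_def strain_def Delta_def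
  by simp

lemma abs_le_sq: "\<bar>y::real\<bar> \<le> 1 + y\<^sup>2"
proof -
  have a: "0 \<le> (\<bar>y\<bar> - 1)\<^sup>2" by simp
  have b: "(\<bar>y\<bar> - 1)\<^sup>2 = y\<^sup>2 - 2 * \<bar>y\<bar> + 1"
    by (simp add: power2_eq_square algebra_simps)
  have c: "0 \<le> y\<^sup>2" by simp
  show ?thesis using a b c by linarith
qed

lemma coord_le_nrm:
  assumes "x \<in> I"
  shows "(pa x)\<^sup>2 \<le> nrm pa pb pc" "(pb x)\<^sup>2 \<le> nrm pa pb pc" "(pc x)\<^sup>2 \<le> nrm pa pb pc"
proof -
  have "pa x * pa x + pb x * pb x + pc x * pc x \<le> nrm pa pb pc"
    unfolding nrm_def inn_def
    by (rule member_le_sum[OF assms _ finI, where f = "\<lambda>x. pa x * pa x + pb x * pb x + pc x * pc x"]) auto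
  then show "(pa x)\<^sup>2 \<le> nrm pa pb pc" "(pb x)\<^sup>2 \<le> nrm pa pb pc" "(pc x)\<^sup>2 \<le> nrm pa pb pc"
    using zero_le_square[of "pa x"] zero_le_square[of "pb x"] zero_le_square[of "pc x"]
    unfolding power2_eq_square by linarith+
qed

lemma exists_max:
  assumes bnd: "\<And>u1 u2 u3. nod u1 \<Longrightarrow> nod u2 \<Longrightarrow> nod u3 \<Longrightarrow> Phi u1 u2 u3 \<le> C"
    and e: "e > 0"
  shows "\<exists>v1 v2 v3. nod v1 \<and> nod v2 \<and> nod v3 \<and>
     (\<forall>u1 u2 u3. nod u1 \<longrightarrow> nod u2 \<longrightarrow> nod u3 \<longrightarrow> Phie e u1 u2 u3 \<le> Phie e v1 v2 v3)"
proof -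
  define V where "V = {Phie e u1 u2 u3 | u1 u2 u3. nod u1 \<and> nod u2 \<and> nod u3}"
  have PC: "Phie e u1 u2 u3 \<le> C - e / 2 * nrm u1 u2 u3" if "nod u1" "nod u2" "nod u3" for u1 u2 u3
    using bnd[OF that] unfolding Phie_def by simp
  have PC': "Phie e u1 u2 u3 \<le> C" if "nod u1" "nod u2" "nod u3" for u1 u2 u3
    using PC[OF that] mult_nonneg_nonneg[of "e / 2" "nrm u1 u2 u3"] nrm_nonneg[of u1 u2 u3] e by linarith
  have z0: "nod (\<lambda>_. 0)" by (simp add: nod_def)
  have Vne: "V \<noteq> {}" unfolding V_def using z0 by blast
  have Vbdd: "bdd_above V" unfolding V_def bdd_above_def using PC' by blast
  define S where "S = Sup V"
  have upper: "Phie e u1 u2 u3 \<le> S" if "nod u1" "nod u2" "nod u3" for u1 u2 u3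
    unfolding S_def using that Vbdd by (intro cSup_upper) (auto simp: V_def)
  have S0: "S \<ge> 0" using upper[OF z0 z0 z0] Phie_zero by simp
  have "\<forall>n. \<exists>t. nod (fst t) \<and> nod (fst (snd t)) \<and> nod (snd (snd t)) \<and>
            S - inverse (real (Suc n)) < Phie e (fst t) (fst (snd t)) (snd (snd t))"
  proof
    fix n
    have "S - inverse (real (Suc n)) < S" by simp
    then obtain y where "y \<in> V" "S - inverse (real (Suc n)) < y"
      using less_cSupD[OF Vne] unfolding S_def by blast
    then obtain u1 u2 u3 where "nod u1" "nod u2" "nod u3" "S - inverse (real (Suc n)) < Phie e u1 u2 u3"
      unfolding V_def by blast
    then show "\<exists>t. nod (fst t) \<and> nod (fst (snd t)) \<and> nod (snd (snd t)) \<and>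
            S - inverse (real (Suc n)) < Phie e (fst t) (fst (snd t)) (snd (snd t))"
      by (intro exI[of _ "(u1, u2, u3)"]) simp
  qed
  from choice[OF this] obtain T0 where T0: "\<forall>n. nod (fst (T0 n)) \<and> nod (fst (snd (T0 n))) \<and> nod (snd (snd (T0 n))) \<and>
            S - inverse (real (Suc n)) < Phie e (fst (T0 n)) (fst (snd (T0 n))) (snd (snd (T0 n)))"
    by blast
  define U1 where "U1 n = fst (T0 n)" for n
  define U2 where "U2 n = fst (snd (T0 n))" for n
  define U3 where "U3 n = snd (snd (T0 n))" for n
  have U: "\<And>n. nod (U1 n)" "\<And>n. nod (U2 n)" "\<And>n. nod (U3 n)"
    and Ulow: "\<And>n. S - inverse (real (Suc n)) < Phie e (U1 n) (U2 n) (U3 n)"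
    using T0 unfolding U1_def U2_def U3_def by blast+
  define R where "R = 2 * (C + 1) / e"
  have nrmR: "nrm (U1 n) (U2 n) (U3 n) \<le> R" for n
  proof -
    have "inverse (real (Suc n)) \<le> 1" by (simp add: inverse_le_1_iff)
    then have "-1 \<le> Phie e (U1 n) (U2 n) (U3 n)" using Ulow[of n] S0 by linarith
    then have "e / 2 * nrm (U1 n) (U2 n) (U3 n) \<le> C + 1" using PC[OF U(1-3)[of n]] by linarith
    then show ?thesis unfolding R_def using e by (simp add: field_simps)
  qed
  define T where "T n = (\<lambda>(x, j::nat). if j = 0 then U1 n x else if j = 1 then U2 n x else U3 n x)" for n
  have Tb: "\<bar>T n xj\<bar> \<le> 1 + R" if xjK: "xj \<in> I \<times> {0, 1, 2}" for n xj
  proof -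
    obtain x j where xj: "xj = (x, j)" "x \<in> I" "j \<in> {0,1,2::nat}" using xjK by (cases xj) auto
    have "(T n xj)\<^sup>2 \<le> nrm (U1 n) (U2 n) (U3 n)"
      using xj(3) coord_le_nrm[OF xj(2), where pa="U1 n" and pb="U2 n" and pc="U3 n"]
      unfolding T_def xj(1) by (elim insertE) simp_all
    then have "(T n xj)\<^sup>2 \<le> R" using nrmR[of n] by linarith
    then show ?thesis using abs_le_sq[of "T n xj"] by linarith
  qed
  obtain r g where r: "strict_mono r" and g: "\<forall>xj\<in>I \<times> {0, 1, 2}. (\<lambda>n. T (r n) xj) \<longlonglongrightarrow> g xj"
    using subseq_fin[of "I \<times> {0, 1, 2::nat}" T "\<lambda>_. 1 + R"] finI Tb by blast
  define g1 where "g1 x = (if x \<in> I then g (x, 0) else 0)" for x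
  define g2 where "g2 x = (if x \<in> I then g (x, 1) else 0)" for x
  define g3 where "g3 x = (if x \<in> I then g (x, 2) else 0)" for x
  have ng: "nod g1" "nod g2" "nod g3" by (auto simp: nod_def g1_def g2_def g3_def)
  have c1: "(\<lambda>n. U1 (r n) x) \<longlonglongrightarrow> g1 x" for x
  proof (cases "x \<in> I")
    case True then show ?thesis using g[rule_format, of "(x, 0)"] by (simp add: T_def g1_def)
  next
    case False then show ?thesis using U(1) by (simp add: nod_def g1_def)
  qed
  have c2: "(\<lambda>n. U2 (r n) x) \<longlonglongrightarrow> g2 x" for x
  proof (cases "x \<in> I")
    case True then show ?thesis using g[rule_format, of "(x, 1)"] by (simp add: T_def g2_def)
  next
    case False then show ?thesis using U(2) by (simp add: nod_def g2_def)
  qed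
  have c3: "(\<lambda>n. U3 (r n) x) \<longlonglongrightarrow> g3 x" for x
  proof (cases "x \<in> I")
    case True then show ?thesis using g[rule_format, of "(x, 2)"] by (simp add: T_def g3_def)
  next
    case False then show ?thesis using U(3) by (simp add: nod_def g3_def)
  qed
  have lim1: "(\<lambda>n. Phie e (U1 (r n)) (U2 (r n)) (U3 (r n))) \<longlonglongrightarrow> Phie e g1 g2 g3"
    by (rule Phie_cont[OF c1 c2 c3])
  have "((\<lambda>n. inverse (real (Suc n))) \<circ> r) \<longlonglongrightarrow> 0"
    by (rule LIMSEQ_subseq_LIMSEQ[OF LIMSEQ_inverse_real_of_nat r])
  then have lim2: "(\<lambda>n. S - inverse (real (Suc (r n)))) \<longlonglongrightarrow> S - 0"
    by (intro tendsto_intros) (simp add: comp_def)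
  have "S - 0 \<le> Phie e g1 g2 g3"
  proof (rule tendsto_le[OF _ lim1 lim2])
    show "\<forall>\<^sub>F n in sequentially. S - inverse (real (Suc (r n))) \<le> Phie e (U1 (r n)) (U2 (r n)) (U3 (r n))"
      using Ulow less_imp_le by (intro always_eventually allI) blast
  qed simp
  then have "\<forall>u1 u2 u3. nod u1 \<longrightarrow> nod u2 \<longrightarrow> nod u3 \<longrightarrow> Phie e u1 u2 u3 \<le> Phie e g1 g2 g3"
  proof (intro allI impI)
    fix u1 u2 u3 assume "nod u1" "nod u2" "nod u3"
    then have "Phie e u1 u2 u3 \<le> S" by (rule upper)
    then show "Phie e u1 u2 u3 \<le> Phie e g1 g2 g3" using \<open>S - 0 \<le> Phie e g1 g2 g3\<close> by linarith
  qed
  then show ?thesis using ng by blast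
qed


definition "dl x = (\<lambda>y::real^2. if y = x then (1::real) else 0)"
definition "c1 x k = incid cm cp k x * (cp k - cm k)$1 / (bar_len cm cp k * Jkk cm cp z k)"
definition "c2 x k = incid cm cp k x * (cp k - cm k)$2 / (bar_len cm cp k * Jkk cm cp z k)"
definition "c3 x k = Delta cm cp z k * incid cm cp k x / Jkk cm cp z k"

lemma nod_dl: "x \<in> I \<Longrightarrow> nod (dl x)" by (auto simp: nod_def dl_def)
lemma nod_0: "nod (\<lambda>_. 0)" by (simp add: nod_def)

lemma unit_gen:
  assumes k: "k \<in> {1..m}"
  shows "lhat cm cp z k * ((A / bar_len cm cp k / bar_len cm cp k + Delta cm cp z k * B / bar_len cm cp k)
          / (1 + (Delta cm cp z k)\<^sup>2))
       = A / (bar_len cm cp k * Jkk cm cp z k) + Delta cm cp z k * B / Jkk cm cp z k"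
proof -
  have l: "bar_len cm cp k \<noteq> 0" using lpos[OF k] by simp
  have J: "Jkk cm cp z k \<noteq> 0" using Jpos[of k] by simp
  show ?thesis unfolding lhat_def Jsq[symmetric] using l J
    by (simp add: field_simps power2_eq_square)
qed

lemma unit1: "k \<in> {1..m} \<Longrightarrow> lhat cm cp z k * eh (dl x) (\<lambda>_. 0) (\<lambda>_. 0) k = c1 x k"
  using unit_gen[of k "incid cm cp k x * (cp k - cm k)$1" 0]
  unfolding eh_def strain_hat_def strain_def c1_def
  by (simp add: Delta_def incid_def dl_def)

lemma unit2: "k \<in> {1..m} \<Longrightarrow> lhat cm cp z k * eh (\<lambda>_. 0) (dl x) (\<lambda>_. 0) k = c2 x k"
  using unit_gen[of k "incid cm cp k x * (cp k - cm k)$2" 0]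
  unfolding eh_def strain_hat_def strain_def c2_def
  by (simp add: Delta_def incid_def dl_def)

lemma unit3: "k \<in> {1..m} \<Longrightarrow> lhat cm cp z k * eh (\<lambda>_. 0) (\<lambda>_. 0) (dl x) k = c3 x k"
  using unit_gen[of k 0 "incid cm cp k x"]
  unfolding eh_def strain_hat_def strain_def c3_def
  by (simp add: Delta_def incid_def dl_def)

lemma inn_dl:
  assumes "x \<in> I"
  shows "inn v1 v2 v3 (dl x) (\<lambda>_. 0) (\<lambda>_. 0) = v1 x"
    "inn v1 v2 v3 (\<lambda>_. 0) (dl x) (\<lambda>_. 0) = v2 x"
    "inn v1 v2 v3 (\<lambda>_. 0) (\<lambda>_. 0) (dl x) = v3 x"
    "(\<Sum>y\<in>I. f y * dl x y) = f x"
  using assms finI by (simp_all add: inn_def dl_def if_distrib[where f="\<lambda>t. _ * t"] cong: if_cong)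


definition "shf v1 v2 v3 k = E0 * a k * max 0 (eh v1 v2 v3 k)"

lemma equil:
  assumes v: "nod v1" "nod v2" "nod v3"
    and mx: "\<And>u1 u2 u3. nod u1 \<Longrightarrow> nod u2 \<Longrightarrow> nod u3 \<Longrightarrow> Phie e u1 u2 u3 \<le> Phie e v1 v2 v3"
    and e: "e \<ge> 0" and x: "x \<in> I"
  shows "(\<Sum>k=1..m. shf v1 v2 v3 k * c1 x k) = - e * v1 x"
    "(\<Sum>k=1..m. shf v1 v2 v3 k * c2 x k) = - e * v2 x"
    "(\<Sum>k=1..m. shf v1 v2 v3 k * c3 x k) = f x - e * v3 x"
proof -
  have r: "(\<Sum>k=1..m. E0 * a k * max 0 (eh v1 v2 v3 k) * lhat cm cp z k * eh h1 h2 h3 k)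
          = (\<Sum>k=1..m. shf v1 v2 v3 k * (lhat cm cp z k * eh h1 h2 h3 k))" for h1 h2 h3
    unfolding shf_def by (simp add: mult.assoc)
  show "(\<Sum>k=1..m. shf v1 v2 v3 k * c1 x k) = - e * v1 x"
  proof -
    have "(\<Sum>k=1..m. shf v1 v2 v3 k * (lhat cm cp z k * eh (dl x) (\<lambda>_. 0) (\<lambda>_. 0) k)) = (\<Sum>k=1..m. shf v1 v2 v3 k * c1 x k)"
      by (intro sum.cong refl) (simp add: unit1)
    then show ?thesis using first_order[OF v nod_dl[OF x] nod_0 nod_0 mx e] unfolding r inn_dl[OF x] by simp
  qed
  show "(\<Sum>k=1..m. shf v1 v2 v3 k * c2 x k) = - e * v2 x"
  proof -
    have "(\<Sum>k=1..m. shf v1 v2 v3 k * (lhat cm cp z k * eh (\<lambda>_. 0) (dl x) (\<lambda>_. 0) k)) = (\<Sum>k=1..m. shf v1 v2 v3 k * c2 x k)"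
      by (intro sum.cong refl) (simp add: unit2)
    then show ?thesis using first_order[OF v nod_0 nod_dl[OF x] nod_0 mx e] unfolding r inn_dl[OF x] by simp
  qed
  show "(\<Sum>k=1..m. shf v1 v2 v3 k * c3 x k) = f x - e * v3 x"
  proof -
    have "(\<Sum>k=1..m. shf v1 v2 v3 k * (lhat cm cp z k * eh (\<lambda>_. 0) (\<lambda>_. 0) (dl x) k)) = (\<Sum>k=1..m. shf v1 v2 v3 k * c3 x k)"
      by (intro sum.cong refl) (simp add: unit3)
    then show ?thesis using first_order[OF v nod_0 nod_0 nod_dl[OF x] mx e] unfolding r inn_dl[OF x] by simp
  qed
qed


lemma term_nonneg: "k \<in> {1..m} \<Longrightarrow> 0 \<le> (max 0 (eh v1 v2 v3 k))\<^sup>2 * a k * lhat cm cp z k"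
  using apos[of k] lhat_pos[of k] by simp

lemma Q_nonneg: "Q v1 v2 v3 \<ge> 0"
  unfolding Q_def using term_nonneg by (intro sum_nonneg) auto

lemma term_le_Q: "k \<in> {1..m} \<Longrightarrow> (max 0 (eh v1 v2 v3 k))\<^sup>2 * a k * lhat cm cp z k \<le> Q v1 v2 v3"
  unfolding Q_def using term_nonneg
  by (intro member_le_sum) auto

lemma shf_sq: "k \<in> {1..m} \<Longrightarrow> (shf v1 v2 v3 k)\<^sup>2 * lhat cm cp z k \<le> E0 * a k * (E0 * Q v1 v2 v3)"
proof -
  assume k: "k \<in> {1..m}"
  have "(shf v1 v2 v3 k)\<^sup>2 * lhat cm cp z k = E0 * a k * (E0 * ((max 0 (eh v1 v2 v3 k))\<^sup>2 * a k * lhat cm cp z k))"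
    unfolding shf_def by (simp add: power2_eq_square algebra_simps)
  also have "\<dots> \<le> E0 * a k * (E0 * Q v1 v2 v3)"
    using term_le_Q[OF k] E0pos apos[OF k] by (intro mult_left_mono) auto
  finally show ?thesis .
qed

lemma shf_nonneg: "k \<in> {1..m} \<Longrightarrow> shf v1 v2 v3 k \<ge> 0"
  unfolding shf_def using E0pos apos by simp

lemma cs_bound:
  "(\<Sum>k=1..m. lhat cm cp z k * shf v1 v2 v3 k)\<^sup>2
     \<le> (\<Sum>k=1..m. a k * lhat cm cp z k) * (E0 * (E0 * Q v1 v2 v3))"
proof -
  define w where "w k = a k * lhat cm cp z k" for k
  have w0: "k \<in> {1..m} \<Longrightarrow> w k \<ge> 0" for k
    unfolding w_def using apos lhat_pos by (simp add: less_imp_le)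
  define y where "y k = E0 * max 0 (eh v1 v2 v3 k)" for k
  have "(\<Sum>k=1..m. lhat cm cp z k * shf v1 v2 v3 k) = (\<Sum>k=1..m. sqrt (w k) * (sqrt (w k) * y k))"
  proof (intro sum.cong refl)
    fix k assume "k \<in> {1..m}"
    then have "sqrt (w k) * sqrt (w k) = w k" using w0 by simp
    then show "lhat cm cp z k * shf v1 v2 v3 k = sqrt (w k) * (sqrt (w k) * y k)"
      unfolding shf_def y_def w_def by (simp add: algebra_simps)
  qed
  also have "(\<dots>)\<^sup>2 \<le> (\<Sum>k=1..m. (sqrt (w k))\<^sup>2) * (\<Sum>k=1..m. (sqrt (w k) * y k)\<^sup>2)"
    by (rule Cauchy_Schwarz_ineq_sum)
  also have "(\<Sum>k=1..m. (sqrt (w k))\<^sup>2) = (\<Sum>k=1..m. a k * lhat cm cp z k)"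
    using w0 by (intro sum.cong refl) (simp add: w_def)
  also have "(\<Sum>k=1..m. (sqrt (w k) * y k)\<^sup>2) = E0 * (E0 * Q v1 v2 v3)"
    unfolding Q_def sum_distrib_left
    using w0 by (intro sum.cong refl) (simp add: w_def y_def power_mult_distrib power2_eq_square algebra_simps)
  finally show ?thesis .
qed

lemma bounds_at_max:
  assumes v: "nod v1" "nod v2" "nod v3"
    and mx: "\<And>u1 u2 u3. nod u1 \<Longrightarrow> nod u2 \<Longrightarrow> nod u3 \<Longrightarrow> Phie e u1 u2 u3 \<le> Phie e v1 v2 v3"
    and e: "e \<ge> 0"
    and bnd: "\<And>u1 u2 u3. nod u1 \<Longrightarrow> nod u2 \<Longrightarrow> nod u3 \<Longrightarrow> Phi u1 u2 u3 \<le> C"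
  shows "E0 * Q v1 v2 v3 \<le> 2 * C" "e * nrm v1 v2 v3 \<le> 2 * C"
proof -
  have val: "Phie e v1 v2 v3 = E0 / 2 * Q v1 v2 v3 + e / 2 * nrm v1 v2 v3"
    by (rule value_at_max[OF v mx e])
  have "Phie e v1 v2 v3 \<le> C"
    using bnd[OF v] mult_nonneg_nonneg[of "e / 2" "nrm v1 v2 v3"] nrm_nonneg[of v1 v2 v3] e
    unfolding Phie_def by linarith
  moreover have "0 \<le> E0 * Q v1 v2 v3" using E0pos Q_nonneg by simp
  moreover have "0 \<le> e * nrm v1 v2 v3" using e nrm_nonneg by simp
  ultimately show "E0 * Q v1 v2 v3 \<le> 2 * C" "e * nrm v1 v2 v3 \<le> 2 * C"
    using val by linarith+
qed


lemma primal:
  assumes sh0: "\<And>k. k \<in> {1..m} \<Longrightarrow> sh k \<ge> 0"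
    and eq1: "\<And>x. x \<in> I \<Longrightarrow> (\<Sum>k=1..m. sh k * c1 x k) = 0"
    and eq2: "\<And>x. x \<in> I \<Longrightarrow> (\<Sum>k=1..m. sh k * c2 x k) = 0"
    and eq3: "\<And>x. x \<in> I \<Longrightarrow> (\<Sum>k=1..m. sh k * c3 x k) = f x"
  shows "ZX X \<Omega> cm cp m f \<le> (\<Sum>k=1..m. lhat cm cp z k * sh k)" "0 \<le> ZX X \<Omega> cm cp m f"
proof -
  let ?J = "Jkk cm cp z" and ?D = "Delta cm cp z" and ?l = "bar_len cm cp"
  define s where "s k = sh k / ?J k" for k
  define q where "q k = ?D k * sh k / ?J k" for k
  define r where "r k = (?D k)\<^sup>2 * sh k / (2 * ?J k)" for k
  define SS where "SS = {(\<Sum>k=1..m. bar_len cm cp k * s k) + 2 * (\<Sum>k=1..m. bar_len cm cp k * r k) | s r q.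
      (\<forall>k\<in>{1..m}. s k \<ge> 0 \<and> r k \<ge> 0 \<and> coneK (r k) (s k) (q k)) \<and>
      (\<forall>x\<in>I. BT cm cp m s x = 0 \<and> DT cm cp m q x = f x)}"
  have Z: "ZX X \<Omega> cm cp m f = Inf SS" unfolding ZX_def SS_def by simp
  have Jp: "?J k > 0" for k by (rule Jpos)
  have cone: "\<forall>k\<in>{1..m}. s k \<ge> 0 \<and> r k \<ge> 0 \<and> coneK (r k) (s k) (q k)"
  proof
    fix k assume k: "k \<in> {1..m}"
    have s0: "s k \<ge> 0" unfolding s_def using sh0[OF k] Jp[of k] by simp
    have r0: "r k \<ge> 0" unfolding r_def using sh0[OF k] Jp[of k] by simp
    have "2 * r k * s k = (q k)\<^sup>2"
      unfolding r_def s_def q_def using Jp[of k] by (simp add: power2_eq_square field_simps)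
    then show "s k \<ge> 0 \<and> r k \<ge> 0 \<and> coneK (r k) (s k) (q k)"
      using s0 r0 by (simp add: coneK_def)
  qed
  have eqs: "\<forall>x\<in>I. BT cm cp m s x = 0 \<and> DT cm cp m q x = f x"
  proof
    fix x assume x: "x \<in> I"
    have comp: "BT cm cp m s x $ i = (\<Sum>k=1..m. sh k * (incid cm cp k x * (cp k - cm k)$i / (?l k * ?J k)))" for i
      unfolding BT_def sum_component vector_scaleR_component s_def
      apply (intro sum.cong refl)
      subgoal for k using lpos[of k] Jp[of k] by (simp add: field_simps)
      done
    have "BT cm cp m s x $ 1 = 0" using comp[of 1] eq1[OF x] unfolding c1_def by simp
    moreover have "BT cm cp m s x $ 2 = 0" using comp[of 2] eq2[OF x] unfolding c2_def by simp
    ultimately have "BT cm cp m s x = 0" by (simp add: vec_eq_iff forall_2)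
    moreover have "DT cm cp m q x = f x"
      using eq3[OF x] unfolding DT_def c3_def q_def by (simp add: field_simps)
    ultimately show "BT cm cp m s x = 0 \<and> DT cm cp m q x = f x" by simp
  qed
  have obj: "(\<Sum>k=1..m. ?l k * s k) + 2 * (\<Sum>k=1..m. ?l k * r k) = (\<Sum>k=1..m. lhat cm cp z k * sh k)"
  proof -
    have "(\<Sum>k=1..m. ?l k * s k) + 2 * (\<Sum>k=1..m. ?l k * r k) = (\<Sum>k=1..m. ?l k * s k + 2 * (?l k * r k))"
      by (simp add: sum.distrib sum_distrib_left)
    also have "\<dots> = (\<Sum>k=1..m. lhat cm cp z k * sh k)"
    proof (intro sum.cong refl)
      fix k
      have J2: "(?J k)\<^sup>2 = 1 + (?D k)\<^sup>2" by (rule Jsq)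
      have "?l k * s k + 2 * (?l k * r k) = ?l k * sh k * (1 + (?D k)\<^sup>2) / ?J k"
        unfolding s_def r_def using Jp[of k] by (simp add: field_simps)
      also have "\<dots> = ?l k * sh k * (?J k)\<^sup>2 / ?J k" using J2 by simp
      also have "\<dots> = lhat cm cp z k * sh k" unfolding lhat_def using Jp[of k]
        by (simp add: power2_eq_square)
      finally show "?l k * s k + 2 * (?l k * r k) = lhat cm cp z k * sh k" .
    qed
    finally show ?thesis .
  qed
  have mem: "(\<Sum>k=1..m. lhat cm cp z k * sh k) \<in> SS"
    unfolding SS_def mem_Collect_eq
    by (rule exI[of _ s], rule exI[of _ r], rule exI[of _ q]) (use cone eqs obj in simp)
  have bdd: "\<forall>y\<in>SS. 0 \<le> y"
  proof
    fix y assume "y \<in> SS"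
    then obtain s' r' q' where y: "y = (\<Sum>k=1..m. ?l k * s' k) + 2 * (\<Sum>k=1..m. ?l k * r' k)"
      and c: "\<forall>k\<in>{1..m}. s' k \<ge> 0 \<and> r' k \<ge> 0" unfolding SS_def by blast
    have "0 \<le> (\<Sum>k=1..m. ?l k * s' k)" using c by (intro sum_nonneg) (simp add: bar_len_def)
    moreover have "0 \<le> (\<Sum>k=1..m. ?l k * r' k)" using c by (intro sum_nonneg) (simp add: bar_len_def)
    ultimately show "0 \<le> y" using y by simp
  qed
  show "ZX X \<Omega> cm cp m f \<le> (\<Sum>k=1..m. lhat cm cp z k * sh k)"
    unfolding Z using mem bdd by (intro cInf_lower) (auto simp: bdd_below_def)
  show "0 \<le> ZX X \<Omega> cm cp m f"
    unfolding Z using mem bdd by (intro cInf_greatest) auto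
qed


lemma resid:
  fixes y ee :: "nat \<Rightarrow> real"
  assumes "\<And>n. (y n)\<^sup>2 \<le> ee n * D" "ee \<longlonglongrightarrow> 0" "\<And>n. ee n \<ge> 0" "D \<ge> 0"
  shows "y \<longlonglongrightarrow> 0"
proof (rule Lim_null_comparison)
  show "\<forall>\<^sub>F n in sequentially. norm (y n) \<le> sqrt (ee n * D)"
    using assms(1) by (intro always_eventually allI) (simp add: real_le_rsqrt)
  have "(\<lambda>n. sqrt (ee n * D)) \<longlonglongrightarrow> sqrt (0 * D)"
    by (intro tendsto_intros assms(2))
  then show "(\<lambda>n. sqrt (ee n * D)) \<longlonglongrightarrow> 0" by simp
qed

lemma core:
  assumes bnd: "\<And>u1 u2 u3. nod u1 \<Longrightarrow> nod u2 \<Longrightarrow> nod u3 \<Longrightarrow> Phi u1 u2 u3 \<le> C"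
    and Vol: "(\<Sum>k=1..m. a k * lhat cm cp z k) \<le> V0"
  shows "(ZX X \<Omega> cm cp m f)\<^sup>2 \<le> 2 * E0 * V0 * C"
proof -
  have "Phi (\<lambda>_. 0) (\<lambda>_. 0) (\<lambda>_. 0) = 0" using Phie_zero[of 0] by (simp add: Phie_def)
  then have C0: "C \<ge> 0" using bnd[OF nod_0 nod_0 nod_0] by simp
  define ee where "ee n = inverse (real (Suc n))" for n
  have ee0: "ee n > 0" for n unfolding ee_def by simp
  have "\<forall>n. \<exists>t. nod (fst t) \<and> nod (fst (snd t)) \<and> nod (snd (snd t)) \<and>
     (\<forall>u1 u2 u3. nod u1 \<longrightarrow> nod u2 \<longrightarrow> nod u3 \<longrightarrow> Phie (ee n) u1 u2 u3 \<le> Phie (ee n) (fst t) (fst (snd t)) (snd (snd t)))"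
  proof
    fix n
    obtain v1 v2 v3 where "nod v1" "nod v2" "nod v3"
      "\<forall>u1 u2 u3. nod u1 \<longrightarrow> nod u2 \<longrightarrow> nod u3 \<longrightarrow> Phie (ee n) u1 u2 u3 \<le> Phie (ee n) v1 v2 v3"
      using exists_max[OF bnd ee0[of n]] by blast
    then show "\<exists>t. nod (fst t) \<and> nod (fst (snd t)) \<and> nod (snd (snd t)) \<and>
     (\<forall>u1 u2 u3. nod u1 \<longrightarrow> nod u2 \<longrightarrow> nod u3 \<longrightarrow> Phie (ee n) u1 u2 u3 \<le> Phie (ee n) (fst t) (fst (snd t)) (snd (snd t)))"
      by (intro exI[of _ "(v1, v2, v3)"]) simp
  qed
  from choice[OF this] obtain T0 where T0: "\<forall>n. nod (fst (T0 n)) \<and> nod (fst (snd (T0 n))) \<and> nod (snd (snd (T0 n))) \<and>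
     (\<forall>u1 u2 u3. nod u1 \<longrightarrow> nod u2 \<longrightarrow> nod u3 \<longrightarrow> Phie (ee n) u1 u2 u3 \<le> Phie (ee n) (fst (T0 n)) (fst (snd (T0 n))) (snd (snd (T0 n))))"
    by blast
  define V1 where "V1 n = fst (T0 n)" for n
  define V2 where "V2 n = fst (snd (T0 n))" for n
  define V3 where "V3 n = snd (snd (T0 n))" for n
  have VV: "nod (V1 n)" "nod (V2 n)" "nod (V3 n)" for n
    using T0 unfolding V1_def V2_def V3_def by blast+
  have mx: "\<And>u1 u2 u3. nod u1 \<Longrightarrow> nod u2 \<Longrightarrow> nod u3 \<Longrightarrow> Phie (ee n) u1 u2 u3 \<le> Phie (ee n) (V1 n) (V2 n) (V3 n)" for n
    using T0 unfolding V1_def V2_def V3_def by blast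
  have e0: "ee n \<ge> 0" for n using ee0[of n] by simp
  have BQ: "E0 * Q (V1 n) (V2 n) (V3 n) \<le> 2 * C" for n
    by (rule bounds_at_max(1)[OF VV mx e0 bnd])
  have BN: "ee n * nrm (V1 n) (V2 n) (V3 n) \<le> 2 * C" for n
    by (rule bounds_at_max(2)[OF VV mx e0 bnd])
  define SH where "SH n k = (if k \<in> {1..m} then shf (V1 n) (V2 n) (V3 n) k else 0)" for n k
  define B where "B k = 1 + E0 * a k * (2 * C) / lhat cm cp z k" for k
  have SHb: "\<bar>SH n k\<bar> \<le> B k" if k: "k \<in> {1..m}" for n k
  proof -
    have "(SH n k)\<^sup>2 * lhat cm cp z k \<le> E0 * a k * (E0 * Q (V1 n) (V2 n) (V3 n))"
      using shf_sq[OF k] k by (simp add: SH_def)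
    also have "\<dots> \<le> E0 * a k * (2 * C)"
      using BQ[of n] E0pos apos[OF k] by (intro mult_left_mono) auto
    finally have "(SH n k)\<^sup>2 \<le> E0 * a k * (2 * C) / lhat cm cp z k"
      using lhat_pos[OF k] by (simp add: pos_le_divide_eq)
    then show ?thesis using abs_le_sq[of "SH n k"] unfolding B_def by linarith
  qed
  obtain r g where r: "strict_mono r" and g: "\<forall>k\<in>{1..m}. (\<lambda>n. SH (r n) k) \<longlonglongrightarrow> g k"
    using subseq_fin[of "{1..m}" SH B] SHb by blast
  have eer: "(\<lambda>n. ee (r n)) \<longlonglongrightarrow> 0"
    using LIMSEQ_subseq_LIMSEQ[OF LIMSEQ_inverse_real_of_nat r] unfolding ee_def comp_def .
  have g0: "g k \<ge> 0" if k: "k \<in> {1..m}" for k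
    using g k shf_nonneg[OF k] by (intro LIMSEQ_le_const[of "\<lambda>n. SH (r n) k"]) (auto simp: SH_def)
  have SHsum: "(\<Sum>k=1..m. SH n k * c x k) = (\<Sum>k=1..m. shf (V1 n) (V2 n) (V3 n) k * c x k)" for n c x
    by (intro sum.cong refl) (simp add: SH_def)
  have limsum: "(\<lambda>n. \<Sum>k=1..m. SH (r n) k * c x k) \<longlonglongrightarrow> (\<Sum>k=1..m. g k * c x k)" for c x
    using g by (intro tendsto_sum tendsto_mult tendsto_const) auto
  have res: "(\<lambda>n. ee (r n) * V (r n) x) \<longlonglongrightarrow> 0"
    if x: "x \<in> I" and Vn: "\<And>n. (V n x)\<^sup>2 \<le> nrm (V1 n) (V2 n) (V3 n)" for V :: "nat \<Rightarrow> real^2 \<Rightarrow> real" and x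
  proof (rule resid[OF _ eer])
    fix n
    have "(ee (r n) * V (r n) x)\<^sup>2 = ee (r n) * (ee (r n) * (V (r n) x)\<^sup>2)"
      by (simp add: power2_eq_square)
    also have "\<dots> \<le> ee (r n) * (ee (r n) * nrm (V1 (r n)) (V2 (r n)) (V3 (r n)))"
      using Vn[of "r n"] e0[of "r n"] by (intro mult_left_mono) auto
    also have "\<dots> \<le> ee (r n) * (2 * C)"
      using BN[of "r n"] e0[of "r n"] by (intro mult_left_mono) auto
    finally show "(ee (r n) * V (r n) x)\<^sup>2 \<le> ee (r n) * (2 * C)" .
  qed (use e0 C0 in auto)
  have eq1: "(\<Sum>k=1..m. g k * c1 x k) = 0" if x: "x \<in> I" for x
  proof -
    have "(\<lambda>n. \<Sum>k=1..m. SH (r n) k * c1 x k) = (\<lambda>n. - (ee (r n) * V1 (r n) x))"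
      unfolding SHsum using equil(1)[OF VV mx e0 x] by simp
    moreover have "(\<lambda>n. - (ee (r n) * V1 (r n) x)) \<longlonglongrightarrow> - 0"
    proof -
      have "(\<lambda>n. ee (r n) * V1 (r n) x) \<longlonglongrightarrow> 0"
        by (rule res[OF x]) (rule coord_le_nrm(1)[OF x])
      then show ?thesis by (intro tendsto_minus)
    qed
    ultimately show ?thesis using limsum[of c1 x] LIMSEQ_unique by fastforce
  qed
  have eq2: "(\<Sum>k=1..m. g k * c2 x k) = 0" if x: "x \<in> I" for x
  proof -
    have "(\<lambda>n. \<Sum>k=1..m. SH (r n) k * c2 x k) = (\<lambda>n. - (ee (r n) * V2 (r n) x))"
      unfolding SHsum using equil(2)[OF VV mx e0 x] by simp
    moreover have "(\<lambda>n. - (ee (r n) * V2 (r n) x)) \<longlonglongrightarrow> - 0"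
    proof -
      have "(\<lambda>n. ee (r n) * V2 (r n) x) \<longlonglongrightarrow> 0"
        by (rule res[OF x]) (rule coord_le_nrm(2)[OF x])
      then show ?thesis by (intro tendsto_minus)
    qed
    ultimately show ?thesis using limsum[of c2 x] LIMSEQ_unique by fastforce
  qed
  have eq3: "(\<Sum>k=1..m. g k * c3 x k) = f x" if x: "x \<in> I" for x
  proof -
    have "(\<lambda>n. \<Sum>k=1..m. SH (r n) k * c3 x k) = (\<lambda>n. f x - ee (r n) * V3 (r n) x)"
      unfolding SHsum using equil(3)[OF VV mx e0 x] by simp
    moreover have "(\<lambda>n. f x - ee (r n) * V3 (r n) x) \<longlonglongrightarrow> f x - 0"
    proof -
      have "(\<lambda>n. ee (r n) * V3 (r n) x) \<longlonglongrightarrow> 0"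
        by (rule res[OF x]) (rule coord_le_nrm(3)[OF x])
      then show ?thesis by (intro tendsto_diff tendsto_const)
    qed
    ultimately show ?thesis using limsum[of c3 x] LIMSEQ_unique by fastforce
  qed
  have Zle: "ZX X \<Omega> cm cp m f \<le> (\<Sum>k=1..m. lhat cm cp z k * g k)"
    and Z0: "0 \<le> ZX X \<Omega> cm cp m f"
    using primal[of g, OF g0 eq1 eq2 eq3] by auto
  have Va: "0 \<le> (\<Sum>k=1..m. a k * lhat cm cp z k)"
    using apos lhat_pos by (intro sum_nonneg) (simp add: less_imp_le)
  have csn: "(\<Sum>k=1..m. lhat cm cp z k * SH n k)\<^sup>2 \<le> V0 * (E0 * (2 * C))" for n
  proof -
    have "(\<Sum>k=1..m. lhat cm cp z k * SH n k) = (\<Sum>k=1..m. lhat cm cp z k * shf (V1 n) (V2 n) (V3 n) k)"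
      by (intro sum.cong refl) (simp add: SH_def)
    then have "(\<Sum>k=1..m. lhat cm cp z k * SH n k)\<^sup>2
        \<le> (\<Sum>k=1..m. a k * lhat cm cp z k) * (E0 * (E0 * Q (V1 n) (V2 n) (V3 n)))"
      using cs_bound by simp
    also have "\<dots> \<le> V0 * (E0 * (2 * C))"
    proof -
      have h: "E0 * (E0 * Q (V1 n) (V2 n) (V3 n)) \<le> E0 * (2 * C)"
        using BQ[of n] E0pos by (intro mult_left_mono) auto
      have "0 \<le> E0 * (E0 * Q (V1 n) (V2 n) (V3 n))"
        using E0pos Q_nonneg[of "V1 n" "V2 n" "V3 n"] by simp
      moreover have V00: "0 \<le> V0" using Va Vol by linarith
      ultimately show ?thesis using mult_mono[OF Vol h V00] by blast
    qed
    finally show ?thesis .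
  qed
  have "(\<lambda>n. (\<Sum>k=1..m. lhat cm cp z k * SH (r n) k)\<^sup>2) \<longlonglongrightarrow> (\<Sum>k=1..m. lhat cm cp z k * g k)\<^sup>2"
    using g by (intro tendsto_power tendsto_sum tendsto_mult tendsto_const) auto
  then have "(\<Sum>k=1..m. lhat cm cp z k * g k)\<^sup>2 \<le> V0 * (E0 * (2 * C))"
    by (rule LIMSEQ_le_const2) (use csn in auto)
  moreover have "(ZX X \<Omega> cm cp m f)\<^sup>2 \<le> (\<Sum>k=1..m. lhat cm cp z k * g k)\<^sup>2"
    using Zle Z0 by (intro power_mono) auto
  ultimately show ?thesis by (simp add: algebra_simps)
qed

end

theorem lemma6p1:
  fixes \<Omega> X :: "(real^2) set" and cm cp :: "nat \<Rightarrow> real^2" and m :: nat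
    and f :: "real^2 \<Rightarrow> real" and E0 V0 :: real
  assumes "open \<Omega>" and "connected \<Omega>" and "bounded \<Omega>"
    and "finite X" and "X \<subseteq> closure \<Omega>"
    and "X - frontier \<Omega> \<subseteq> interior (convex hull (X \<inter> frontier \<Omega>))"
    and "bij_betw (\<lambda>k. {cm k, cp k}) {1..m} {{x, y} | x y. x \<in> X \<and> y \<in> X \<and> x \<noteq> y}"
    and "E0 > 0" and "V0 > 0"
  shows "CXmin X \<Omega> cm cp m f E0 V0 \<ge> ereal ((ZX X \<Omega> cm cp m f)\<^sup>2 / (2 * E0 * V0))"
proof -
  note bij = assms(7)
  have finI: "finite (interior_nodes X \<Omega>)"
    using assms(4) unfolding interior_nodes_def by simp
  have distk: "cm k \<noteq> cp k" if k: "k \<in> {1..m}" for k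
  proof
    assume eq: "cm k = cp k"
    have "{cm k, cp k} \<in> {{x, y} | x y. x \<in> X \<and> y \<in> X \<and> x \<noteq> y}"
      using bij_betwE[OF bij] k by blast
    then obtain x y where "{cm k, cp k} = {x, y}" "x \<noteq> y" by blast
    then show False using eq by (auto simp: doubleton_eq_iff)
  qed
  define b where "b = (ZX X \<Omega> cm cp m f)\<^sup>2 / (2 * E0 * V0)"
  show ?thesis
    unfolding CXmin_def b_def[symmetric]
  proof (rule INF_greatest)
    fix za assume za: "za \<in> {(z, a). nodal X \<Omega> z \<and> (\<forall>k\<in>{1..m}. a k \<ge> 0)
                     \<and> (\<Sum>k=1..m. a k * lhat cm cp z k) \<le> V0}"
    obtain z a where zaeq: "za = (z, a)" by (cases za)
    have apos: "\<And>k. k \<in> {1..m} \<Longrightarrow> a k \<ge> 0" and Vol: "(\<Sum>k=1..m. a k * lhat cm cp z k) \<le> V0"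
      using za zaeq by auto
    interpret T: trs X \<Omega> cm cp m f E0 z a
      using finI distk assms(8) apos by unfold_locales auto
    let ?S = "CX X \<Omega> cm cp m f E0 z a"
    have elem: "ereal (T.Phi u1 u2 w) \<le> ?S" if "T.nod u1" "T.nod u2" "T.nod w" for u1 u2 w
      unfolding CX_def T.nod_eq[symmetric]
      by (rule SUP_upper2[of "(u1, u2, w)"]) (use that in \<open>auto simp: T.Phi_def T.Q_def T.eh_def T.nod_eq\<close>)
    show "ereal b \<le> CX X \<Omega> cm cp m f E0 (fst za) (snd za)"
      unfolding zaeq fst_conv snd_conv
    proof (rule ccontr)
      assume "\<not> ereal b \<le> ?S"
      then have lt: "?S < ereal b" by simp
      have "ereal (T.Phi (\<lambda>_. 0) (\<lambda>_. 0) (\<lambda>_. 0)) \<le> ?S" by (rule elem) (auto intro: T.nod_0)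
      then have "?S \<noteq> - \<infinity>" by auto
      moreover have "?S \<noteq> \<infinity>" using lt by auto
      ultimately obtain C where SC: "?S = ereal C" by (cases ?S) auto
      have bnd: "T.Phi u1 u2 w \<le> C" if "T.nod u1" "T.nod u2" "T.nod w" for u1 u2 w
        using elem[OF that] SC by simp
      have "(ZX X \<Omega> cm cp m f)\<^sup>2 \<le> 2 * E0 * V0 * C"
        using T.core[OF bnd Vol] by blast
      then have "b \<le> C" unfolding b_def using assms(8,9) by (simp add: pos_divide_le_eq mult.commute mult.left_commute)
      then show False using lt SC by simp
    qed
  qed
qed

end
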